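(* Let $n\ge1$, $0<T_0<T_1<\dots<T_n$ with $T_i=T_{i-1}+P$ ($1\le i\le n$) for some $P>0$, let $0<B_{\mathrm{low}}<B_{\mathrm{up}}$, $F>0$, and let $C_i:=\mathbf{1}_{\{B_{\mathrm{low}}<S_u<B_{\mathrm{up}}\ \forall u\in[T_{i-1},T_i]\}}$ for $1\le i\le n$, $A:=\sum_{i=1}^nC_i$. Fix $t<T_0$ and write $\mathbb{P}_t,\mathbb{E}_t$ for (risk-neutral) probability and expectation conditional on $\mathcal{F}_t$. Then the time-$t$ price of the payoff $(F-A)^+$ paid at $T_n$ satisfies \[ e^{-r(T_n-t)}\mathbb{E}_t[(F-A)^+]=e^{-r(T_n-t)}\sum_{i=0}^{n\wedge\lfloor F\rfloor}(F-i)\,\mathbb{P}_t[A=i], \] where $\mathbb{P}_t[A=n]=\mathbb{P}_t[B_{\mathrm{low}}<S_u<B_{\mathrm{up}}\ \forall u\in[T_0,T_n]]$; the remaining point masses $\mathbb{P}_t[A=i]$, $0\le i\le n-1$, are determined by $\mathbb{P}_t[A=n]$ and the moments $\mathbb{E}_t[A^\nu]$, $0\le\nu<n$, through the linear system $\mathbb{E}_t[A^\nu]=\sum_{i=0}^n i^\nu\,\mathbb{P}_t[A=i]$; and for $1\le\nu<n$, \[ \mathbb{E}_t[A^\nu]=\sum_{J\subseteq\{1,\dots,n\}}c(\nu,J)\,\mathbb{P}_t\big[B_{\mathrm{low}}<S_u<B_{\mathrm{up}}\ \forall u\in\textstyle\bigcup_{j\in J}[T_{j-1},T_{j-1}+P]\big],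 \] with $c(\nu,J):=\sum_{0\le i_1,\dots,i_n\le\nu,\ \mathrm{supp}(\mathbf{i})=J}\binom{\nu}{i_1,\dots,i_n}$.
   Context: Black–Scholes model under the pricing measure: $dS_t/S_t=r\,dt+\sigma\,dW_t$, $r>0$, $\sigma>0$, $W$ a standard Brownian motion with filtration $(\mathcal{F}_t)$. For $\mathbf{i}=(i_1,\dots,i_n)$, $\mathrm{supp}(\mathbf{i})$ is the set of indices $k$ with $i_k\neq0$, and $\binom{\nu}{i_1,\dots,i_n}$ is the multinomial coefficient (zero unless $i_1+\dots+i_n=\nu$). The conditional probabilities appearing are the undiscounted prices (i.e. $e^{r(\cdot)}$ times the discounted prices) of multi-period double barrier digitals. *)

theory Defs
  imports "HOL-Probability.Probability"
begin

definition std_BM :: "'a measure \<Rightarrow> (real \<Rightarrow> 'a measure) \<Rightarrow> (real \<Rightarrow> 'a \<Rightarrow> real) \<Rightarrow> bool" where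
  "std_BM M F W \<longleftrightarrow>
     prob_space M \<and>
     (\<forall>s. subalgebra M (F s)) \<and>
     (\<forall>s u. s \<le> u \<longrightarrow> sets (F s) \<subseteq> sets (F u)) \<and>
     (\<forall>s\<ge>0. W s \<in> borel_measurable (F s)) \<and>
     (\<forall>\<omega>\<in>space M. W 0 \<omega> = 0 \<and> continuous_on {0..} (\<lambda>u. W u \<omega>)) \<and>
     (\<forall>s u. 0 \<le> s \<and> s < u \<longrightarrow>
        distributed M lborel (\<lambda>\<omega>. W u \<omega> - W s \<omega>)
          (\<lambda>x. ennreal (normal_density 0 (sqrt (u - s)) x))) \<and>
     (\<forall>s u. 0 \<le> s \<and> s < u \<longrightarrow>
        (\<forall>A\<in>sets (F s). \<forall>B\<in>sets borel.
           measure M (A \<inter> ((\<lambda>\<omega>. W u \<omega> - W s \<omega>) -` B \<inter> space M))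
           = measure M A * measure M ((\<lambda>\<omega>. W u \<omega> - W s \<omega>) -` B \<inter> space M)))"

text \<open>Black--Scholes price path under the pricing measure:
  S_u = S_0 exp((r - \<sigma>^2/2) u + \<sigma> W_u), the solution of dS/S = r dt + \<sigma> dW.\<close>
definition bs_price :: "real \<Rightarrow> real \<Rightarrow> real \<Rightarrow> (real \<Rightarrow> 'a \<Rightarrow> real) \<Rightarrow> real \<Rightarrow> 'a \<Rightarrow> real" where
  "bs_price S0 r \<sigma> W u \<omega> = S0 * exp ((r - \<sigma>\<^sup>2 / 2) * u + \<sigma> * W u \<omega>)"

definition inside_event :: "'a measure \<Rightarrow> (real \<Rightarrow> 'a \<Rightarrow> real) \<Rightarrow> real \<Rightarrow> real \<Rightarrow> real set \<Rightarrow> 'a set" where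
  "inside_event M S Blow Bup I = {\<omega>\<in>space M. \<forall>u\<in>I. Blow < S u \<omega> \<and> S u \<omega> < Bup}"

abbreviation cexp :: "'a measure \<Rightarrow> 'a measure \<Rightarrow> ('a \<Rightarrow> real) \<Rightarrow> 'a \<Rightarrow> real" where
  "cexp M G f \<equiv> real_cond_exp M G f"

abbreviation cprob :: "'a measure \<Rightarrow> 'a measure \<Rightarrow> 'a set \<Rightarrow> 'a \<Rightarrow> real" where
  "cprob M G E \<equiv> real_cond_exp M G (indicator E)"

definition multinom :: "nat \<Rightarrow> nat \<Rightarrow> (nat \<Rightarrow> nat) \<Rightarrow> nat" where
  "multinom \<nu> n i = (if (\<Sum>k\<in>{1..n}. i k) = \<nu>
      then fact \<nu> div (\<Prod>k\<in>{1..n}. fact (i k)) else 0)"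

definition supp_idx :: "nat \<Rightarrow> (nat \<Rightarrow> nat) \<Rightarrow> nat set" where
  "supp_idx n i = {k\<in>{1..n}. i k \<noteq> 0}"

definition coef_c :: "nat \<Rightarrow> nat \<Rightarrow> nat set \<Rightarrow> nat" where
  "coef_c n \<nu> J = (\<Sum>i\<in>{i\<in>{1..n} \<rightarrow>\<^sub>E {0..\<nu>}. supp_idx n i = J}. multinom \<nu> n i)"

end

theory Submission
  imports Defs "HOL-Computational_Algebra.Polynomial"
begin


lemma inside_event_meas:
  fixes S :: "real \<Rightarrow> 'a \<Rightarrow> real"
  assumes meas: "\<And>u. u\<in>{a..b} \<Longrightarrow> S u \<in> borel_measurable M"
    and cont: "\<And>\<omega>. \<omega>\<in>space M \<Longrightarrow> continuous_on {a..b} (\<lambda>u. S u \<omega>)" and ab: "a \<le> b"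
  shows "inside_event M S Blow Bup {a..b} \<in> sets M"
proof -
  define D where "D = (\<rat> \<inter> {a..b}) \<union> {a}"
  have Dc: "countable D" unfolding D_def by (auto intro: countable_rat countable_Int1)
  have Dne: "D \<noteq> {}" unfolding D_def by auto
  have Dsub: "D \<subseteq> {a..b}" unfolding D_def using ab by auto
  have clos: "{a..b} \<subseteq> closure D"
  proof
    fix u assume u: "u \<in> {a..b}"
    show "u \<in> closure D"
      unfolding closure_approachable
    proof (intro allI impI)
      fix e :: real assume e: "e > 0"
      show "\<exists>y\<in>D. dist y u < e"
      proof (cases "u = a")
        case True thus ?thesis using e unfolding D_def by auto
      next
        case False
        hence "max a (u - e) < u" using u e by auto
        then obtain q where q: "q \<in> \<rat>" "max a (u - e) < q" "q < u" using Rats_dense_in_real by blast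
        hence "q \<in> D" using u unfolding D_def by auto
        moreover have "dist q u < e" using q by (auto simp: dist_real_def)
        ultimately show ?thesis by blast
      qed
    qed
  qed
  define G where "G = (\<lambda>k::nat. \<Inter>q\<in>D. {\<omega>\<in>space M. Blow + inverse (real (Suc k)) \<le> S q \<omega> \<and> S q \<omega> \<le> Bup - inverse (real (Suc k))})"
  have eq: "inside_event M S Blow Bup {a..b} = (\<Union>k. G k)"
  proof (intro equalityI subsetI)
    fix \<omega> assume w: "\<omega> \<in> inside_event M S Blow Bup {a..b}"
    hence sp: "\<omega> \<in> space M" and ins: "\<forall>u\<in>{a..b}. Blow < S u \<omega> \<and> S u \<omega> < Bup"
      unfolding inside_event_def by auto
    have c: "continuous_on {a..b} (\<lambda>u. S u \<omega>)" using cont sp .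
    obtain x1 where x1: "x1 \<in> {a..b}" "\<forall>y\<in>{a..b}. S x1 \<omega> \<le> S y \<omega>"
      using continuous_attains_inf[OF compact_Icc _ c] ab by auto
    obtain x2 where x2: "x2 \<in> {a..b}" "\<forall>y\<in>{a..b}. S y \<omega> \<le> S x2 \<omega>"
      using continuous_attains_sup[OF compact_Icc _ c] ab by auto
    have "0 < min (S x1 \<omega> - Blow) (Bup - S x2 \<omega>)" using ins x1 x2 by auto
    then obtain m where m: "m > 0" "inverse (real m) < min (S x1 \<omega> - Blow) (Bup - S x2 \<omega>)"
      using ex_inverse_of_nat_less by blast
    define k where "k = m - 1"
    have k: "inverse (real (Suc k)) < min (S x1 \<omega> - Blow) (Bup - S x2 \<omega>)" using m unfolding k_def by simp
    have "\<omega> \<in> G k" unfolding G_def using sp Dsub x1 x2 k by fastforce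
    thus "\<omega> \<in> (\<Union>k. G k)" by blast
  next
    fix \<omega> assume "\<omega> \<in> (\<Union>k. G k)"
    then obtain k where k: "\<omega> \<in> G k" by blast
    let ?e = "inverse (real (Suc k))"
    have sp: "\<omega> \<in> space M" using k Dne unfolding G_def by auto
    have c: "continuous_on {a..b} (\<lambda>u. S u \<omega>)" using cont sp .
    define U where "U = {a..b} \<inter> (\<lambda>u. S u \<omega>) -` {Blow + ?e..Bup - ?e}"
    have "closed U" unfolding U_def by (rule continuous_closed_preimage[OF c]) auto
    moreover have "D \<subseteq> U" using k Dsub unfolding G_def U_def by auto
    ultimately have "closure D \<subseteq> U" by (rule closure_minimal[rotated])
    with clos have "{a..b} \<subseteq> U" by auto
    moreover have "?e > 0" by simp
    ultimately have "\<forall>u\<in>{a..b}. Blow < S u \<omega> \<and> S u \<omega> < Bup"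
    proof (intro ballI)
      fix u assume "{a..b} \<subseteq> U" "?e > 0" "u \<in> {a..b}"
      hence "Blow + ?e \<le> S u \<omega> \<and> S u \<omega> \<le> Bup - ?e" unfolding U_def by auto
      thus "Blow < S u \<omega> \<and> S u \<omega> < Bup" using \<open>?e > 0\<close> by linarith
    qed
    thus "\<omega> \<in> inside_event M S Blow Bup {a..b}" using sp unfolding inside_event_def by auto
  qed
  have "G k \<in> sets M" for k
    unfolding G_def
  proof (rule sets.countable_INT'[OF Dc Dne], safe)
    fix q assume "q \<in> D"
    hence [measurable]: "S q \<in> borel_measurable M" using Dsub meas by auto
    show "{\<omega> \<in> space M. Blow + inverse (real (Suc k)) \<le> S q \<omega> \<and> S q \<omega> \<le> Bup - inverse (real (Suc k))} \<in> sets M"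
      by measurable
  qed
  thus ?thesis unfolding eq by auto
qed



lemma fact_prod_dvd:
  assumes "finite K"
  shows "(\<Prod>k\<in>K. fact (i k) :: nat) dvd fact (\<Sum>k\<in>K. i k)"
  using assms
proof (induction K rule: finite_induct)
  case empty thus ?case by simp
next
  case (insert a K)
  have "(\<Prod>k\<in>insert a K. fact (i k) :: nat) = fact (i a) * (\<Prod>k\<in>K. fact (i k))"
    using insert by simp
  also have "\<dots> dvd fact (i a) * fact (\<Sum>k\<in>K. i k)" using insert.IH by (rule mult_dvd_mono[OF dvd_refl])
  also have "\<dots> dvd fact (i a + (\<Sum>k\<in>K. i k))" by (rule fact_fact_dvd_fact)
  also have "i a + (\<Sum>k\<in>K. i k) = (\<Sum>k\<in>insert a K. i k)" using insert by simp
  finally show ?case .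
qed

lemma multinomial_real:
  fixes x :: "nat \<Rightarrow> real"
  assumes "finite K"
  shows "(\<Sum>k\<in>K. x k) ^ \<nu> = (\<Sum>i\<in>{i\<in>K \<rightarrow>\<^sub>E {0..\<nu>}. sum i K = \<nu>}.
            fact \<nu> / (\<Prod>k\<in>K. fact (i k)) * (\<Prod>k\<in>K. x k ^ i k))"
  using assms
proof (induction K arbitrary: \<nu> rule: finite_induct)
  case empty
  show ?case
  proof (cases "\<nu> = 0")
    case True
    have "{i\<in>{} \<rightarrow>\<^sub>E {0..\<nu>}. sum i {} = \<nu>} = {\<lambda>_. undefined}" using True by auto
    thus ?thesis using True by simp
  next
    case False
    have "{i\<in>{} \<rightarrow>\<^sub>E {0..\<nu>}. sum i {} = \<nu>} = {}" using False by auto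
    thus ?thesis using False by simp
  qed
next
  case (insert a K)
  define Sg where "Sg = (\<lambda>m::nat. {i::nat\<Rightarrow>nat. i\<in>K \<rightarrow>\<^sub>E {0..m} \<and> sum i K = m})"
  define S' where "S' = {i\<in>insert a K \<rightarrow>\<^sub>E {0..\<nu>}. sum i (insert a K) = \<nu>}"
  define g where "g = (\<lambda>p::nat \<times> (nat \<Rightarrow> nat). of_nat (\<nu> choose fst p) * x a ^ fst p *
        (fact (\<nu> - fst p) / (\<Prod>k\<in>K. fact (snd p k)) * (\<Prod>k\<in>K. x k ^ snd p k)))"
  have finSg: "finite (Sg m)" for m unfolding Sg_def
    by (rule finite_subset[of _ "K \<rightarrow>\<^sub>E {0..m}"]) (use insert(1) in \<open>auto intro: finite_PiE\<close>)
  have "(\<Sum>k\<in>insert a K. x k) ^ \<nu> = (x a + (\<Sum>k\<in>K. x k)) ^ \<nu>" using insert by simp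
  also have "\<dots> = (\<Sum>j\<le>\<nu>. of_nat (\<nu> choose j) * x a ^ j * (\<Sum>k\<in>K. x k) ^ (\<nu> - j))"
    by (rule binomial_ring)
  also have "\<dots> = (\<Sum>j\<le>\<nu>. \<Sum>i\<in>Sg (\<nu> - j). g (j, i))"
    unfolding insert.IH Sg_def g_def by (simp add: sum_distrib_left)
  also have "\<dots> = (\<Sum>p\<in>Sigma {..\<nu>} (\<lambda>j. Sg (\<nu> - j)). g p)"
    by (subst sum.Sigma) (auto simp: finSg split_def)
  also have "\<dots> = (\<Sum>f\<in>S'. fact \<nu> / (\<Prod>k\<in>insert a K. fact (f k)) * (\<Prod>k\<in>insert a K. x k ^ f k))"
  proof (rule sum.reindex_bij_witness[where j = "\<lambda>p. (snd p)(a := fst p)" and i = "\<lambda>f. (f a, restrict f K)"])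
    fix p assume p: "p \<in> Sigma {..\<nu>} (\<lambda>j. Sg (\<nu> - j))"
    obtain j i' where pj: "p = (j, i')" by (cases p)
    have j: "j \<le> \<nu>" and i': "i' \<in> K \<rightarrow>\<^sub>E {0..\<nu> - j}" "sum i' K = \<nu> - j"
      using p pj unfolding Sg_def by auto
    have ext: "i' x = undefined" if "x \<notin> K" for x using i' that by (auto simp: PiE_def extensional_def)
    show "(((snd p)(a := fst p)) a, restrict ((snd p)(a := fst p)) K) = p"
      using pj i' insert(2) by (auto simp: restrict_def fun_eq_iff ext)
    have sK: "sum (i'(a := j)) K = sum i' K" using insert(2) by (intro sum.cong) auto
    show "(snd p)(a := fst p) \<in> S'"
      unfolding S'_def using pj i' j insert(1,2) sK by (auto simp: PiE_def extensional_def Pi_def)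
    have pK1: "(\<Prod>k\<in>K. fact (if k = a then j else i' k)) = (\<Prod>k\<in>K. (fact (i' k) :: real))"
      using insert(2) by (intro prod.cong) auto
    have pK2: "(\<Prod>k\<in>K. x k ^ (if k = a then j else i' k)) = (\<Prod>k\<in>K. x k ^ i' k)"
      using insert(2) by (intro prod.cong) auto
    show "fact \<nu> / (\<Prod>k\<in>insert a K. fact (((snd p)(a := fst p)) k)) *
          (\<Prod>k\<in>insert a K. x k ^ ((snd p)(a := fst p)) k) = g p"
      using insert(1,2) j unfolding pj g_def
      by (simp add: pK1 pK2 binomial_fact field_simps)
  next
    fix f assume f: "f \<in> S'"
    have fa: "f a \<le> \<nu>" and fK: "\<forall>k\<in>K. f k \<le> \<nu>" and sf: "f a + sum f K = \<nu>"
      and ext: "\<And>x. x \<notin> insert a K \<Longrightarrow> f x = undefined"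
      using f insert(1,2) unfolding S'_def by (auto simp: PiE_def extensional_def)
    have le: "f k \<le> sum f K" if "k \<in> K" for k using insert(1) that by (intro member_le_sum) auto
    show "(snd (f a, restrict f K))(a := fst (f a, restrict f K)) = f"
      using ext by (auto simp: fun_eq_iff restrict_def)
    have sr: "sum (restrict f K) K = sum f K" by simp
    show "(f a, restrict f K) \<in> Sigma {..\<nu>} (\<lambda>j. Sg (\<nu> - j))"
      unfolding Sg_def using fa sf le by (auto simp: PiE_def)
  qed
  finally show ?case unfolding S'_def .
qed



lemma power_sum_01:
  fixes x :: "nat \<Rightarrow> real"
  assumes x01: "\<forall>k\<in>{1..n}. x k = 0 \<or> x k = 1"
  shows "(\<Sum>k\<in>{1..n}. x k) ^ \<nu> = (\<Sum>J\<in>Pow {1..n}. real (coef_c n \<nu> J) * (\<Prod>k\<in>J. x k))"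
proof -
  define PI where "PI = {1..n} \<rightarrow>\<^sub>E {0..\<nu>}"
  have finPI: "finite PI" unfolding PI_def by (auto intro: finite_PiE)
  have "(\<Sum>k\<in>{1..n}. x k) ^ \<nu> = (\<Sum>i\<in>{i\<in>{1..n} \<rightarrow>\<^sub>E {0..\<nu>}. sum i {1..n} = \<nu>}.
            fact \<nu> / (\<Prod>k\<in>{1..n}. fact (i k)) * (\<Prod>k\<in>{1..n}. x k ^ i k))"
    by (rule multinomial_real) simp
  also have "\<dots> = (\<Sum>i\<in>PI. real (multinom \<nu> n i) * (\<Prod>k\<in>supp_idx n i. x k))"
  proof (rule sum.mono_neutral_cong_left[OF finPI])
    show "{i \<in> {1..n} \<rightarrow>\<^sub>E {0..\<nu>}. sum i {1..n} = \<nu>} \<subseteq> PI" unfolding PI_def by auto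
    show "\<forall>i\<in>PI - {i \<in> {1..n} \<rightarrow>\<^sub>E {0..\<nu>}. sum i {1..n} = \<nu>}. real (multinom \<nu> n i) * (\<Prod>k\<in>supp_idx n i. x k) = 0"
      unfolding PI_def multinom_def by auto
  next
    fix i assume i: "i \<in> {i \<in> {1..n} \<rightarrow>\<^sub>E {0..\<nu>}. sum i {1..n} = \<nu>}"
    have dv: "(\<Prod>k\<in>{1..n}. fact (i k) :: nat) dvd fact \<nu>"
      using fact_prod_dvd[of "{1..n}" i] i by simp
    have m: "real (multinom \<nu> n i) = fact \<nu> / (\<Prod>k\<in>{1..n}. fact (i k))"
    proof -
      have "multinom \<nu> n i = fact \<nu> div (\<Prod>k\<in>{1..n}. fact (i k))"
        using i unfolding multinom_def by simp
      hence "real (multinom \<nu> n i) = real (fact \<nu>) / real (\<Prod>k\<in>{1..n}. fact (i k) :: nat)"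
        using real_of_nat_div[OF dv] by simp
      thus ?thesis by (simp add: of_nat_prod)
    qed
    have sub: "supp_idx n i \<subseteq> {1..n}" unfolding supp_idx_def by auto
    have "(\<Prod>k\<in>{1..n}. x k ^ i k) = (\<Prod>k\<in>supp_idx n i. x k ^ i k)"
      by (rule prod.mono_neutral_right[OF _ sub]) (auto simp: supp_idx_def)
    also have "\<dots> = (\<Prod>k\<in>supp_idx n i. x k)"
    proof (rule prod.cong[OF refl])
      fix k assume k: "k \<in> supp_idx n i"
      hence "i k \<noteq> 0" "k \<in> {1..n}" unfolding supp_idx_def by auto
      thus "x k ^ i k = x k" using x01 by (cases "x k = 0") auto
    qed
    finally show "fact \<nu> / (\<Prod>k\<in>{1..n}. fact (i k)) * (\<Prod>k\<in>{1..n}. x k ^ i k) =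
        real (multinom \<nu> n i) * (\<Prod>k\<in>supp_idx n i. x k)" using m by simp
  qed
  also have "\<dots> = (\<Sum>J\<in>Pow {1..n}. \<Sum>i\<in>{i. i \<in> PI \<and> supp_idx n i = J}. real (multinom \<nu> n i) * (\<Prod>k\<in>supp_idx n i. x k))"
    by (rule sum.group[symmetric, OF finPI]) (auto simp: supp_idx_def)
  also have "\<dots> = (\<Sum>J\<in>Pow {1..n}. real (coef_c n \<nu> J) * (\<Prod>k\<in>J. x k))"
    unfolding coef_c_def PI_def by (auto simp: of_nat_sum sum_distrib_right intro!: sum.cong)
  finally show ?thesis .
qed



lemma vandermonde_zero:
  fixes d :: "nat \<Rightarrow> real"
  assumes h: "\<forall>\<nu><n. (\<Sum>i\<in>{0..<n}. real i ^ \<nu> * d i) = 0" and j: "j < n"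
  shows "d j = 0"
proof -
  define p where "p = (\<Prod>k\<in>{0..<n}-{j}. [:- real k, 1:])"
  have "degree p \<le> (\<Sum>k\<in>{0..<n}-{j}. degree [:- real k, 1:])"
    unfolding p_def using degree_prod_sum_le[of "{0..<n}-{j}" "\<lambda>k. [:- real k, 1:]"] by (simp add: o_def)
  also have "\<dots> = card ({0..<n}-{j})" by simp
  also have "\<dots> < n" using j by simp
  finally have dp: "degree p < n" .
  have pe: "poly p x = (\<Sum>\<nu><n. coeff p \<nu> * x ^ \<nu>)" for x
  proof -
    have "poly p x = (\<Sum>\<nu>\<le>degree p. coeff p \<nu> * x ^ \<nu>)" by (rule poly_altdef)
    also have "\<dots> = (\<Sum>\<nu><n. coeff p \<nu> * x ^ \<nu>)"
      by (rule sum.mono_neutral_left) (use dp in \<open>auto simp: coeff_eq_0\<close>)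
    finally show ?thesis .
  qed
  have pv: "poly p (real i) = (\<Prod>k\<in>{0..<n}-{j}. real i - real k)" for i
    unfolding p_def by (simp add: poly_prod)
  have "0 = (\<Sum>\<nu><n. coeff p \<nu> * (\<Sum>i\<in>{0..<n}. real i ^ \<nu> * d i))" using h by simp
  also have "\<dots> = (\<Sum>i\<in>{0..<n}. d i * poly p (real i))"
    unfolding pe by (simp add: sum_distrib_left sum_distrib_right mult_ac sum.swap[of _ "{..<n}"])
  also have "\<dots> = d j * poly p (real j)"
  proof -
    have "(\<Sum>i\<in>{0..<n} - {j}. d i * poly p (real i)) = 0"
    proof (rule sum.neutral, rule ballI)
      fix i assume i: "i \<in> {0..<n} - {j}"
      have "(\<Prod>k\<in>{0..<n}-{j}. real i - real k) = 0" using i by (intro prod_zero) auto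
      thus "d i * poly p (real i) = 0" by (simp add: pv)
    qed
    thus ?thesis using sum.remove[of "{0..<n}" j "\<lambda>i. d i * poly p (real i)"] j by simp
  qed
  finally have "d j * poly p (real j) = 0" by simp
  moreover have "poly p (real j) \<noteq> 0" unfolding pv by (subst prod_zero_iff) auto
  ultimately show ?thesis by simp
qed


lemma cexp_lin:
  fixes E :: "'b \<Rightarrow> 'a set" and c :: "'b \<Rightarrow> real"
  assumes prob: "prob_space M" and sub: "subalgebra M G" and fin: "finite I"
    and E: "\<And>i. i \<in> I \<Longrightarrow> E i \<in> sets M"
  shows "AE x in M. real_cond_exp M G (\<lambda>x. \<Sum>i\<in>I. c i * indicator (E i) x) x
           = (\<Sum>i\<in>I. c i * real_cond_exp M G (indicator (E i)) x)"
proof -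
  interpret prob_space M by fact
  have "finite_measure_subalgebra M G"
    unfolding finite_measure_subalgebra_def finite_measure_subalgebra_axioms_def
    using sub finite_measure_axioms by auto
  then interpret sigma_finite_subalgebra M G by (rule finite_measure_subalgebra_is_sigma_finite)
  define f where "f i = (\<lambda>x. if i \<in> I then c i * indicator (E i) x else 0)" for i
  have int: "integrable M (f i)" for i
  proof (cases "i \<in> I")
    case True
    have "integrable M (indicator (E i) :: 'a \<Rightarrow> real)"
      using E[OF True] by (intro integrable_real_indicator) (auto simp: less_top[symmetric])
    thus ?thesis using True unfolding f_def by simp
  next
    case False thus ?thesis unfolding f_def by simp
  qed
  have 1: "AE x in M. real_cond_exp M G (\<lambda>x. \<Sum>i\<in>I. f i x) x = (\<Sum>i\<in>I. real_cond_exp M G (f i) x)"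
    by (rule real_cond_exp_sum) (rule int)
  have 2: "(\<lambda>x. \<Sum>i\<in>I. f i x) = (\<lambda>x. \<Sum>i\<in>I. c i * indicator (E i) x)"
    unfolding f_def by (auto intro!: sum.cong)
  have 3: "AE x in M. \<forall>i\<in>I. real_cond_exp M G (f i) x = c i * real_cond_exp M G (indicator (E i)) x"
  proof (rule AE_finite_allI[OF fin])
    fix i assume i: "i \<in> I"
    have "f i = (\<lambda>x. c i * indicator (E i) x)" unfolding f_def using i by auto
    moreover have "integrable M (indicator (E i) :: 'a \<Rightarrow> real)"
      using E[OF i] by (intro integrable_real_indicator) (auto simp: less_top[symmetric])
    ultimately show "AE x in M. real_cond_exp M G (f i) x = c i * real_cond_exp M G (indicator (E i)) x"
      using real_cond_exp_cmult by auto
  qed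
  from 1 3 show ?thesis unfolding 2 by eventually_elim (auto intro!: sum.cong)
qed

lemma cexp_cong_pt:
  assumes prob: "prob_space M" and sub: "subalgebra M G"
    and eq: "\<And>x. x \<in> space M \<Longrightarrow> f x = g x"
    and fm: "f \<in> borel_measurable M" and gm: "g \<in> borel_measurable M"
  shows "AE x in M. real_cond_exp M G f x = real_cond_exp M G g x"
proof -
  interpret prob_space M by fact
  have "finite_measure_subalgebra M G"
    unfolding finite_measure_subalgebra_def finite_measure_subalgebra_axioms_def
    using sub finite_measure_axioms by auto
  then interpret sigma_finite_subalgebra M G by (rule finite_measure_subalgebra_is_sigma_finite)
  show ?thesis by (rule real_cond_exp_cong) (use eq fm gm in auto)
qed

lemma pick_sum:
  "(\<Sum>i\<in>{0..N}. h i * (if real m = real i then 1 else (0::real))) = (if m \<le> N then h m else 0)"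
proof -
  have "(\<Sum>i\<in>{0..N}. h i * (if real m = real i then 1 else (0::real))) = (\<Sum>i\<in>{0..N}. if m = i then h i else 0)"
    by (rule sum.cong) auto
  thus ?thesis by (simp add: sum.delta)
qed

lemma cind_meas:
  assumes [measurable]: "A \<in> sets M"
  shows "(\<lambda>x. c * indicator A x :: real) \<in> borel_measurable M"
  by measurable


theorem theorem4p1:
  fixes M :: "'a measure" and F :: "real \<Rightarrow> 'a measure" and W :: "real \<Rightarrow> 'a \<Rightarrow> real"
    and S0 r \<sigma> :: real and n :: nat and T :: "nat \<Rightarrow> real" and P Blow Bup Fs t :: real
    and S :: "real \<Rightarrow> 'a \<Rightarrow> real" and C :: "nat \<Rightarrow> 'a \<Rightarrow> real" and A :: "'a \<Rightarrow> real"
  assumes BM: "std_BM M F W"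
    and S0: "S0 > 0" and r: "r > 0" and sigma: "\<sigma> > 0"
    and n: "n \<ge> 1"
    and T0: "0 < T 0" and P: "P > 0"
    and Tstep: "\<forall>i\<in>{1..n}. T i = T (i - 1) + P"
    and B: "0 < Blow" "Blow < Bup"
    and Fpos: "Fs > 0"
    and t: "0 \<le> t" "t < T 0"
  defines "S \<equiv> bs_price S0 r \<sigma> W"
    and "C \<equiv> \<lambda>i. indicator (inside_event M S Blow Bup {T (i - 1)..T i})"
    and "A \<equiv> \<lambda>\<omega>. \<Sum>i\<in>{1..n}. C i \<omega>"
  shows
    "(AE \<omega> in M. exp (- r * (T n - t)) * cexp M (F t) (\<lambda>\<omega>. max (Fs - A \<omega>) 0) \<omega>
        = exp (- r * (T n - t)) *
          (\<Sum>i\<in>{0..min n (nat \<lfloor>Fs\<rfloor>)}. (Fs - real i) * cprob M (F t) {\<omega>\<in>space M. A \<omega> = real i} \<omega>))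
   \<and> (AE \<omega> in M. cprob M (F t) {\<omega>\<in>space M. A \<omega> = real n} \<omega>
        = cprob M (F t) (inside_event M S Blow Bup {T 0..T n}) \<omega>)
   \<and> (AE \<omega> in M. \<forall>\<nu><n. cexp M (F t) (\<lambda>\<omega>. A \<omega> ^ \<nu>) \<omega>
        = (\<Sum>i\<in>{0..n}. real i ^ \<nu> * cprob M (F t) {\<omega>\<in>space M. A \<omega> = real i} \<omega>))
   \<and> (AE \<omega> in M. \<forall>q :: nat \<Rightarrow> real.
        (\<forall>\<nu><n. cexp M (F t) (\<lambda>\<omega>. A \<omega> ^ \<nu>) \<omega>
           = (\<Sum>i\<in>{0..<n}. real i ^ \<nu> * q i)
             + real n ^ \<nu> * cprob M (F t) {\<omega>\<in>space M. A \<omega> = real n} \<omega>)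
        \<longrightarrow> (\<forall>i<n. q i = cprob M (F t) {\<omega>\<in>space M. A \<omega> = real i} \<omega>))
   \<and> (AE \<omega> in M. \<forall>\<nu>\<in>{1..<n}. cexp M (F t) (\<lambda>\<omega>. A \<omega> ^ \<nu>) \<omega>
        = (\<Sum>J\<in>Pow {1..n}. real (coef_c n \<nu> J) *
             cprob M (F t) (inside_event M S Blow Bup (\<Union>j\<in>J. {T (j - 1)..T (j - 1) + P})) \<omega>))"
proof -
  have prob: "prob_space M" and subs: "\<And>s. subalgebra M (F s)"
    and Wf: "\<And>s. s \<ge> 0 \<Longrightarrow> W s \<in> borel_measurable (F s)"
    and Wc: "\<And>\<omega>. \<omega> \<in> space M \<Longrightarrow> continuous_on {0..} (\<lambda>u. W u \<omega>)"
    using BM unfolding std_BM_def by auto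
  have sub: "subalgebra M (F t)" by (rule subs)
  have Wm: "W s \<in> borel_measurable M" if "s \<ge> 0" for s
    using measurable_from_subalg[OF subs Wf[OF that]] .
  have Seq: "S u = (\<lambda>\<omega>. S0 * exp ((r - \<sigma>\<^sup>2 / 2) * u + \<sigma> * W u \<omega>))" for u
    unfolding S_def bs_price_def by (simp add: fun_eq_iff)
  have Sm: "S u \<in> borel_measurable M" if "u \<ge> 0" for u
  proof -
    have [measurable]: "W u \<in> borel_measurable M" using Wm that .
    show ?thesis unfolding Seq by measurable
  qed
  have Sc: "continuous_on {0..} (\<lambda>u. S u \<omega>)" if "\<omega> \<in> space M" for \<omega>
    unfolding Seq using Wc[OF that] by (intro continuous_intros) auto
  have Tform: "T i = T 0 + real i * P" if "i \<le> n" for i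
    using that
  proof (induction i)
    case 0 thus ?case by simp
  next
    case (Suc i)
    hence "T (Suc i) = T i + P" using Tstep by force
    thus ?case using Suc by (simp add: algebra_simps)
  qed
  define Ev where "Ev i = inside_event M S Blow Bup {T (i - 1)..T i}" for i
  have Evm: "Ev i \<in> sets M" if i: "i \<in> {1..n}" for i
  proof -
    have a: "T (i - 1) = T 0 + real (i - 1) * P" "T i = T 0 + real i * P" using Tform[of "i - 1"] Tform[of i] i by auto
    have "T (i - 1) \<le> T i" using a P i by (auto intro!: mult_right_mono)
    moreover have "T 0 \<le> T (i - 1)" using a P by auto
    ultimately show ?thesis unfolding Ev_def
      using T0 by (intro inside_event_meas Sm continuous_on_subset[OF Sc]) auto
  qed
  have Cdef: "C i = indicator (Ev i)" for i unfolding C_def Ev_def by simp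
  have Am[measurable]: "A \<in> borel_measurable M"
    unfolding A_def Cdef by (intro borel_measurable_sum borel_measurable_indicator Evm)
  have Acard: "A \<omega> = real (card {i\<in>{1..n}. \<omega> \<in> Ev i})" for \<omega>
  proof -
    have "A \<omega> = (\<Sum>i\<in>{1..n}. of_bool (\<omega> \<in> Ev i))" unfolding A_def Cdef by (simp add: indicator_def)
    also have "\<dots> = real (card ({1..n} \<inter> {i. \<omega> \<in> Ev i}))" by simp
    finally show ?thesis by (simp add: Int_def)
  qed
  have Ale: "card {i\<in>{1..n}. \<omega> \<in> Ev i} \<le> n" for \<omega>
  proof -
    have "card {i\<in>{1..n}. \<omega> \<in> Ev i} \<le> card {1..n}" by (rule card_mono) auto
    thus ?thesis by simp
  qed
  define Ai where "Ai i = {\<omega>\<in>space M. A \<omega> = real i}" for i :: nat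
  have Aim: "Ai i \<in> sets M" for i unfolding Ai_def by measurable
  have indAi: "indicator (Ai i) \<omega> = (if A \<omega> = real i then 1 else (0::real))" if "\<omega> \<in> space M" for i \<omega>
    unfolding Ai_def using that by (auto simp: indicator_def)
  have phi: "g (A \<omega>) = (\<Sum>i\<in>{0..n}. g (real i) * indicator (Ai i) \<omega>)" if w: "\<omega> \<in> space M" for g :: "real \<Rightarrow> real" and \<omega>
  proof -
    define m where "m = card {i\<in>{1..n}. \<omega> \<in> Ev i}"
    have Am': "A \<omega> = real m" "m \<le> n" unfolding m_def using Acard Ale by auto
    show ?thesis unfolding indAi[OF w] Am'(1) pick_sum[of "\<lambda>i. g (real i)"] using Am'(2) by simp
  qed
  define N where "N = min n (nat \<lfloor>Fs\<rfloor>)"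
  have p1pt: "max (Fs - A \<omega>) 0 = (\<Sum>i\<in>{0..N}. (Fs - real i) * indicator (Ai i) \<omega>)" if w: "\<omega> \<in> space M" for \<omega>
  proof -
    define m where "m = card {i\<in>{1..n}. \<omega> \<in> Ev i}"
    have Am': "A \<omega> = real m" "m \<le> n" unfolding m_def using Acard Ale by auto
    have "(\<Sum>i\<in>{0..N}. (Fs - real i) * indicator (Ai i) \<omega>) = (if m \<le> N then Fs - real m else 0)"
      unfolding indAi[OF w] Am'(1) by (rule pick_sum)
    moreover have "max (Fs - real m) 0 = (if m \<le> N then Fs - real m else 0)"
    proof (cases "m \<le> N")
      case True
      hence "real m \<le> real (nat \<lfloor>Fs\<rfloor>)" unfolding N_def by simp
      also have "\<dots> \<le> Fs" using Fpos by linarith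
      finally show ?thesis using True by simp
    next
      case False
      hence "m > nat \<lfloor>Fs\<rfloor>" using Am'(2) unfolding N_def by simp
      hence "real m \<ge> real (nat \<lfloor>Fs\<rfloor>) + 1" by simp
      moreover have "Fs < real (nat \<lfloor>Fs\<rfloor>) + 1" using Fpos by linarith
      ultimately show ?thesis using False by simp
    qed
    ultimately show ?thesis using Am'(1) by simp
  qed
  have P1: "AE \<omega> in M. exp (- r * (T n - t)) * cexp M (F t) (\<lambda>\<omega>. max (Fs - A \<omega>) 0) \<omega>
        = exp (- r * (T n - t)) *
          (\<Sum>i\<in>{0..min n (nat \<lfloor>Fs\<rfloor>)}. (Fs - real i) * cprob M (F t) {\<omega>\<in>space M. A \<omega> = real i} \<omega>)"
  proof -
    have a: "AE \<omega> in M. cexp M (F t) (\<lambda>\<omega>. max (Fs - A \<omega>) 0) \<omega> = cexp M (F t) (\<lambda>\<omega>. \<Sum>i\<in>{0..N}. (Fs - real i) * indicator (Ai i) \<omega>) \<omega>"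
      apply (rule cexp_cong_pt[OF prob sub p1pt])
      apply measurable
      apply (auto intro!: pred_sets2[OF _ measurable_id] Aim)
      done
    have b: "AE \<omega> in M. cexp M (F t) (\<lambda>\<omega>. \<Sum>i\<in>{0..N}. (Fs - real i) * indicator (Ai i) \<omega>) \<omega>
        = (\<Sum>i\<in>{0..N}. (Fs - real i) * cprob M (F t) (Ai i) \<omega>)"
      by (rule cexp_lin[OF prob sub]) (auto intro: Aim)
    from a b show ?thesis unfolding N_def Ai_def by eventually_elim simp
  qed
  have cover: "{T 0..T m} \<subseteq> (\<Union>i\<in>{1..m}. {T (i - 1)..T i})" if "1 \<le> m" "m \<le> n" for m
    using that
  proof (induction m)
    case 0 thus ?case by simp
  next
    case (Suc m)
    show ?case
    proof (cases "m = 0")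
      case True thus ?thesis by auto
    next
      case False
      hence "{T 0..T m} \<subseteq> (\<Union>i\<in>{1..m}. {T (i - 1)..T i})" using Suc by auto
      hence "{T 0..T (Suc m)} \<subseteq> (\<Union>i\<in>{1..m}. {T (i - 1)..T i}) \<union> {T m..T (Suc m)}" by auto
      also have "\<dots> \<subseteq> (\<Union>i\<in>{1..Suc m}. {T (i - 1)..T i})" by force
      finally show ?thesis .
    qed
  qed
  have inside_sub: "{T (i - 1)..T i} \<subseteq> {T 0..T n}" if "i \<in> {1..n}" for i
  proof -
    have a: "T (i - 1) = T 0 + real (i - 1) * P" "T i = T 0 + real i * P" "T n = T 0 + real n * P"
      using Tform[of "i - 1"] Tform[of i] Tform[of n] that by auto
    show ?thesis unfolding a using P that by (auto intro!: mult_right_mono)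
  qed
  have seteq: "{\<omega>\<in>space M. A \<omega> = real n} = inside_event M S Blow Bup {T 0..T n}"
  proof (intro equalityI subsetI)
    fix \<omega> assume "\<omega> \<in> {\<omega>\<in>space M. A \<omega> = real n}"
    hence w: "\<omega> \<in> space M" and c: "card {i\<in>{1..n}. \<omega> \<in> Ev i} = card {1..n}" using Acard by auto
    have "{i\<in>{1..n}. \<omega> \<in> Ev i} = {1..n}" by (rule card_subset_eq[OF _ _ c]) auto
    hence all: "\<forall>i\<in>{1..n}. \<omega> \<in> Ev i" by blast
    show "\<omega> \<in> inside_event M S Blow Bup {T 0..T n}"
      unfolding inside_event_def
    proof (safe intro!: w)
      fix u assume "u \<in> {T 0..T n}"
      then obtain i where i: "i \<in> {1..n}" "u \<in> {T (i - 1)..T i}" using cover[of n] n by blast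
      thus "Blow < S u \<omega>" "S u \<omega> < Bup" using all unfolding Ev_def inside_event_def by auto
    qed
  next
    fix \<omega> assume w: "\<omega> \<in> inside_event M S Blow Bup {T 0..T n}"
    hence sp: "\<omega> \<in> space M" unfolding inside_event_def by auto
    have "\<forall>i\<in>{1..n}. \<omega> \<in> Ev i" using w inside_sub unfolding Ev_def inside_event_def by blast
    hence "{i\<in>{1..n}. \<omega> \<in> Ev i} = {1..n}" by blast
    thus "\<omega> \<in> {\<omega>\<in>space M. A \<omega> = real n}" using sp Acard by simp
  qed
  have P2: "AE \<omega> in M. cprob M (F t) {\<omega>\<in>space M. A \<omega> = real n} \<omega>
        = cprob M (F t) (inside_event M S Blow Bup {T 0..T n}) \<omega>"
    unfolding seteq by simp
  have P3': "AE \<omega> in M. \<forall>\<nu>\<in>{..<n}. cexp M (F t) (\<lambda>\<omega>. A \<omega> ^ \<nu>) \<omega>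
        = (\<Sum>i\<in>{0..n}. real i ^ \<nu> * cprob M (F t) (Ai i) \<omega>)"
  proof (rule AE_finite_allI)
    fix \<nu> :: nat
    have a: "AE \<omega> in M. cexp M (F t) (\<lambda>\<omega>. A \<omega> ^ \<nu>) \<omega> = cexp M (F t) (\<lambda>\<omega>. \<Sum>i\<in>{0..n}. real i ^ \<nu> * indicator (Ai i) \<omega>) \<omega>"
      apply (rule cexp_cong_pt[OF prob sub phi])
      apply measurable
      apply (auto intro!: pred_sets2[OF _ measurable_id] Aim)
      done
    have b: "AE \<omega> in M. cexp M (F t) (\<lambda>\<omega>. \<Sum>i\<in>{0..n}. real i ^ \<nu> * indicator (Ai i) \<omega>) \<omega>
        = (\<Sum>i\<in>{0..n}. real i ^ \<nu> * cprob M (F t) (Ai i) \<omega>)"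
      by (rule cexp_lin[OF prob sub]) (auto intro: Aim)
    from a b show "AE \<omega> in M. cexp M (F t) (\<lambda>\<omega>. A \<omega> ^ \<nu>) \<omega> = (\<Sum>i\<in>{0..n}. real i ^ \<nu> * cprob M (F t) (Ai i) \<omega>)"
      by eventually_elim simp
  qed simp
  have P3: "AE \<omega> in M. \<forall>\<nu><n. cexp M (F t) (\<lambda>\<omega>. A \<omega> ^ \<nu>) \<omega>
        = (\<Sum>i\<in>{0..n}. real i ^ \<nu> * cprob M (F t) {\<omega>\<in>space M. A \<omega> = real i} \<omega>)"
    using P3' unfolding Ai_def by eventually_elim auto
  have P4: "AE \<omega> in M. \<forall>q :: nat \<Rightarrow> real.
        (\<forall>\<nu><n. cexp M (F t) (\<lambda>\<omega>. A \<omega> ^ \<nu>) \<omega>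
           = (\<Sum>i\<in>{0..<n}. real i ^ \<nu> * q i)
             + real n ^ \<nu> * cprob M (F t) {\<omega>\<in>space M. A \<omega> = real n} \<omega>)
        \<longrightarrow> (\<forall>i<n. q i = cprob M (F t) {\<omega>\<in>space M. A \<omega> = real i} \<omega>)"
    using P3
  proof eventually_elim
    case (elim \<omega>)
    show ?case
    proof (intro allI impI)
      fix q :: "nat \<Rightarrow> real" and j
      assume hq: "\<forall>\<nu><n. cexp M (F t) (\<lambda>\<omega>. A \<omega> ^ \<nu>) \<omega>
           = (\<Sum>i\<in>{0..<n}. real i ^ \<nu> * q i)
             + real n ^ \<nu> * cprob M (F t) {\<omega>\<in>space M. A \<omega> = real n} \<omega>" and j: "j < n"
      define p where "p i = cprob M (F t) {\<omega>\<in>space M. A \<omega> = real i} \<omega>" for i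
      have "\<forall>\<nu><n. (\<Sum>i\<in>{0..<n}. real i ^ \<nu> * (q i - p i)) = 0"
      proof (intro allI impI)
        fix \<nu> assume \<nu>: "\<nu> < n"
        have "(\<Sum>i\<in>{0..n}. real i ^ \<nu> * p i) = (\<Sum>i\<in>{0..<n}. real i ^ \<nu> * p i) + real n ^ \<nu> * p n"
          by (simp add: atLeastLessThanSuc_atLeastAtMost[symmetric])
        hence "(\<Sum>i\<in>{0..<n}. real i ^ \<nu> * q i) = (\<Sum>i\<in>{0..<n}. real i ^ \<nu> * p i)"
          using hq elim \<nu> unfolding p_def by auto
        thus "(\<Sum>i\<in>{0..<n}. real i ^ \<nu> * (q i - p i)) = 0"
          by (simp add: right_diff_distrib sum_subtractf)
      qed
      from vandermonde_zero[OF this j] show "q j = p j" by simp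
    qed
  qed
  define EJ where "EJ J = inside_event M S Blow Bup (\<Union>j\<in>J. {T (j - 1)..T (j - 1) + P})" for J
  have EJ_eq: "EJ J = space M \<inter> (\<Inter>j\<in>J. Ev j)" if J: "J \<subseteq> {1..n}" for J
  proof -
    have "T (j - 1) + P = T j" if "j \<in> J" for j using Tstep J that by auto
    hence "(\<Union>j\<in>J. {T (j - 1)..T (j - 1) + P}) = (\<Union>j\<in>J. {T (j - 1)..T j})" by auto
    thus ?thesis unfolding EJ_def Ev_def inside_event_def by auto
  qed
  have EJm: "EJ J \<in> sets M" if J: "J \<subseteq> {1..n}" for J
  proof (cases "J = {}")
    case True thus ?thesis using EJ_eq[OF J] by simp
  next
    case False
    have "finite J" using J finite_subset by blast
    hence "(\<Inter>j\<in>J. Ev j) \<in> sets M" using False J Evm by (intro sets.finite_INT) auto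
    thus ?thesis using EJ_eq[OF J] by auto
  qed
  have p5pt: "A \<omega> ^ \<nu> = (\<Sum>J\<in>Pow {1..n}. real (coef_c n \<nu> J) * indicator (EJ J) \<omega>)" if w: "\<omega> \<in> space M" for \<omega> \<nu>
  proof -
    have "A \<omega> ^ \<nu> = (\<Sum>J\<in>Pow {1..n}. real (coef_c n \<nu> J) * (\<Prod>k\<in>J. C k \<omega>))"
      unfolding A_def by (rule power_sum_01) (auto simp: Cdef indicator_def)
    also have "\<dots> = (\<Sum>J\<in>Pow {1..n}. real (coef_c n \<nu> J) * indicator (EJ J) \<omega>)"
    proof (rule sum.cong[OF refl])
      fix J assume J: "J \<in> Pow {1..n}"
      have "(\<Prod>k\<in>J. C k \<omega>) = indicator (EJ J) \<omega>"
      proof -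
        have fJ: "finite J" using J finite_subset by auto
        have "(\<Prod>k\<in>J. C k \<omega>) = (\<Prod>k\<in>J. of_bool (\<omega> \<in> Ev k))" by (simp add: Cdef indicator_def)
        also have "\<dots> = of_bool (\<forall>k\<in>J. \<omega> \<in> Ev k)" using fJ by (induction J rule: finite_induct) auto
        also have "\<dots> = indicator (EJ J) \<omega>" using EJ_eq[of J] J w by (auto simp: indicator_def)
        finally show ?thesis .
      qed
      thus "real (coef_c n \<nu> J) * (\<Prod>k\<in>J. C k \<omega>) = real (coef_c n \<nu> J) * indicator (EJ J) \<omega>" by simp
    qed
    finally show ?thesis .
  qed
  have P5: "AE \<omega> in M. \<forall>\<nu>\<in>{1..<n}. cexp M (F t) (\<lambda>\<omega>. A \<omega> ^ \<nu>) \<omega>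
        = (\<Sum>J\<in>Pow {1..n}. real (coef_c n \<nu> J) *
             cprob M (F t) (inside_event M S Blow Bup (\<Union>j\<in>J. {T (j - 1)..T (j - 1) + P})) \<omega>)"
  proof (rule AE_finite_allI)
    fix \<nu> :: nat
    have a: "AE \<omega> in M. cexp M (F t) (\<lambda>\<omega>. A \<omega> ^ \<nu>) \<omega> = cexp M (F t) (\<lambda>\<omega>. \<Sum>J\<in>Pow {1..n}. real (coef_c n \<nu> J) * indicator (EJ J) \<omega>) \<omega>"
      apply (rule cexp_cong_pt[OF prob sub p5pt])
      apply measurable
      apply (auto intro!: pred_sets2[OF _ measurable_id] EJm)
      done
    have b: "AE \<omega> in M. cexp M (F t) (\<lambda>\<omega>. \<Sum>J\<in>Pow {1..n}. real (coef_c n \<nu> J) * indicator (EJ J) \<omega>) \<omega>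
        = (\<Sum>J\<in>Pow {1..n}. real (coef_c n \<nu> J) * cprob M (F t) (EJ J) \<omega>)"
      by (rule cexp_lin[OF prob sub], simp, blast intro: EJm)
    from a b show "AE \<omega> in M. cexp M (F t) (\<lambda>\<omega>. A \<omega> ^ \<nu>) \<omega> = (\<Sum>J\<in>Pow {1..n}. real (coef_c n \<nu> J) *
             cprob M (F t) (inside_event M S Blow Bup (\<Union>j\<in>J. {T (j - 1)..T (j - 1) + P})) \<omega>)"
      unfolding EJ_def by eventually_elim simp
  qed simp
  show ?thesis using P1 P2 P3 P4 P5 by blast
qed


end
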